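(* Fix $0<\epsilon<2$. (1) If $2\le p_1<p_2<\infty$, then $\delta(p_2,\epsilon)<\delta(p_1,\epsilon)$. (2) If $1<p_1<p_2\le 2$, then $\delta(p_1,\epsilon)<\delta(p_2,\epsilon)$.
   Context: For $1<p<\infty$ and $0<\epsilon\le2$: if $1<p\le2$, $\delta(p,\epsilon)$ is the unique $\delta\in[0,1]$ with $(1-\delta+\frac{\epsilon}{2})^p+|1-\delta-\frac{\epsilon}{2}|^p=2$; if $p\ge2$, $\delta(p,\epsilon)=1-\left(1-(\frac{\epsilon}{2})^p\right)^{1/p}$. *)

theory Defs
  imports "HOL-Analysis.Analysis"
begin

text \<open>Modulus-of-convexity constant delta(p, eps) for 1 < p < infinity, 0 < eps <= 2.
  For 1 < p <= 2 it is the unique delta in [0,1] solving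
  (1 - delta + eps/2)^p + |1 - delta - eps/2|^p = 2;
  for p >= 2 it is 1 - (1 - (eps/2)^p)^(1/p).  (At p = 2 both agree.)\<close>

definition delta :: "real \<Rightarrow> real \<Rightarrow> real" where
  "delta p \<epsilon> =
     (if p \<le> 2 then
        (THE d. 0 \<le> d \<and> d \<le> 1 \<and>
           (1 - d + \<epsilon> / 2) powr p + \<bar>1 - d - \<epsilon> / 2\<bar> powr p = 2)
      else 1 - (1 - (\<epsilon> / 2) powr p) powr (1 / p))"

end

theory Submission
  imports Defs
begin

lemma gmono:
  fixes p u1 u2 :: real
  assumes p: "1 < p" and u: "0 \<le> u1" "u1 < u2" "u2 \<le> 1"
  shows "(1+u1) powr p + (1-u1) powr p < (1+u2) powr p + (1-u2) powr p"
proof -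
  let ?g = "\<lambda>u::real. (1+u) powr p + (1-u) powr p"
  have c: "continuous_on {u1..u2} ?g"
    using u p by (intro continuous_intros continuous_on_powr') auto
  have d: "?g differentiable at x" if "u1 < x" "x < u2" for x
  proof -
    have "(?g has_real_derivative (p * (1+x) powr (p-1) - p * (1-x) powr (p-1))) (at x)"
      using that u by (auto intro!: derivative_eq_intros simp: powr_diff)
    then show ?thesis using real_differentiable_def by blast
  qed
  obtain l z where z: "u1 < z" "z < u2" "(?g has_real_derivative l) (at z)"
    and e: "?g u2 - ?g u1 = (u2 - u1) * l"
    using MVT[OF u(2) c d] by blast
  have "(?g has_real_derivative (p * (1+z) powr (p-1) - p * (1-z) powr (p-1))) (at z)"
    using z u by (auto intro!: derivative_eq_intros simp: powr_diff)
  then have l: "l = p * (1+z) powr (p-1) - p * (1-z) powr (p-1)"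
    using z(3) DERIV_unique by blast
  have "(1-z) powr (p-1) < (1+z) powr (p-1)"
    using z u p by (intro powr_less_mono2) auto
  then have "l > 0" using l p by simp
  then show ?thesis using e u by (smt (verit) mult_pos_pos)
qed

definition H :: "real \<Rightarrow> real \<Rightarrow> real \<Rightarrow> real" where
  "H a p t = (t+a) powr p + \<bar>t-a\<bar> powr p"

lemma key2:
  fixes p u :: real
  assumes "1 < p" "0 < u" "u \<le> 1"
  shows "2 < (1+u) powr p + (1-u) powr p"
  using gmono[of p 0 u] assms by simp

lemma hA:
  fixes a p t s :: real
  assumes "0 < a" "1 < p" "a \<le> t" "t < s"
  shows "H a p t < H a p s"
proof -
  have "(t+a) powr p < (s+a) powr p" using assms by (intro powr_less_mono2) auto
  moreover have "\<bar>t-a\<bar> powr p \<le> \<bar>s-a\<bar> powr p" using assms by (intro powr_mono2) auto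
  ultimately show ?thesis unfolding H_def by simp
qed

lemma hB:
  fixes a p t s :: real
  assumes a: "0 < a" and p: "1 < p" and ts: "0 \<le> t" "t < s" "s \<le> a"
  shows "H a p t < H a p s"
proof -
  have e: "H a p x = a powr p * ((1 + x/a) powr p + (1 - x/a) powr p)" if "0 \<le> x" "x \<le> a" for x
  proof -
    have "t + a = a * (1 + t/a)" for t using a by (simp add: field_simps)
    have 1: "x + a = a * (1 + x/a)" using a by (simp add: field_simps)
    have 2: "\<bar>x-a\<bar> = a * (1 - x/a)" using a that by (simp add: field_simps)
    have "(a * (1 + x/a)) powr p = a powr p * (1 + x/a) powr p"
      by (rule powr_mult)
    moreover have "(a * (1 - x/a)) powr p = a powr p * (1 - x/a) powr p"
      by (rule powr_mult)
    ultimately show ?thesis unfolding H_def 1 2 by (simp add: algebra_simps)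
  qed
  have "(1 + t/a) powr p + (1 - t/a) powr p < (1 + s/a) powr p + (1 - s/a) powr p"
    using a ts p by (intro gmono) (auto simp: field_simps)
  then show ?thesis using e[of t] e[of s] ts a by simp
qed

lemma hmono:
  fixes a p t s :: real
  assumes "0 < a" "1 < p" "0 \<le> t" "t < s"
  shows "H a p t < H a p s"
proof (cases "s \<le> a")
  case True then show ?thesis using hB assms by blast
next
  case False
  show ?thesis
  proof (cases "a \<le> t")
    case True then show ?thesis using hA assms by blast
  next
    case False
    then have "H a p t < H a p a" using hB assms by simp
    also have "H a p a < H a p s" using hA assms \<open>\<not> s \<le> a\<close> by simp
    finally show ?thesis .
  qed
qed

lemma root:
  fixes a p :: real
  assumes a: "0 < a" "a < 1" and p: "1 < p"
  shows "\<exists>t. 0 < t \<and> t \<le> 1 \<and> H a p t = 2"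
proof -
  have h0: "H a p 0 < 2"
  proof -
    have "a powr p < 1 powr p" using a p by (intro powr_less_mono2) auto
    then show ?thesis unfolding H_def using a by simp
  qed
  have "2 < H a p 1" unfolding H_def using key2[of p a] a p by (simp add: add.commute)
  moreover have "continuous_on {0..1} (H a p)"
    unfolding H_def using a p by (intro continuous_intros continuous_on_powr') auto
  ultimately obtain t where t: "0 \<le> t" "t \<le> 1" "H a p t = 2"
    using IVT'[of "H a p" 0 2 1] h0 by auto
  moreover have "t \<noteq> 0" using t h0 by auto
  ultimately have "0 < t \<and> t \<le> 1 \<and> H a p t = 2" by auto
  then show ?thesis by blast
qed

lemma delta_eq:
  fixes \<epsilon> p t :: real
  assumes e: "0 < \<epsilon>" "\<epsilon> < 2" and p: "1 < p" "p \<le> 2" and t: "0 \<le> t" "t \<le> 1" "H (\<epsilon>/2) p t = 2"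
  shows "delta p \<epsilon> = 1 - t"
proof -
  have "(THE d. 0 \<le> d \<and> d \<le> 1 \<and>
           (1 - d + \<epsilon> / 2) powr p + \<bar>1 - d - \<epsilon> / 2\<bar> powr p = 2) = 1 - t"
  proof (rule the_equality)
    show "0 \<le> 1 - t \<and> 1 - t \<le> 1 \<and> (1 - (1 - t) + \<epsilon> / 2) powr p + \<bar>1 - (1 - t) - \<epsilon> / 2\<bar> powr p = 2"
      using t unfolding H_def by simp
  next
    fix d assume d: "0 \<le> d \<and> d \<le> 1 \<and> (1 - d + \<epsilon> / 2) powr p + \<bar>1 - d - \<epsilon> / 2\<bar> powr p = 2"
    then have hd: "H (\<epsilon>/2) p (1-d) = 2" unfolding H_def by (simp add: algebra_simps)
    have "1 - d = t"
    proof (rule ccontr)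
      assume "1 - d \<noteq> t"
      then have "1 - d < t \<or> t < 1 - d" by linarith
      then show False
        using hmono[of "\<epsilon>/2" p "1-d" t] hmono[of "\<epsilon>/2" p t "1-d"] hd t d e p by auto
    qed
    then show "d = 1 - t" by simp
  qed
  then show ?thesis unfolding delta_def using p by simp
qed

lemma pm:
  fixes a p q t :: real
  assumes a: "0 < a" and pq: "1 < p" "p < q" and t: "0 < t" "H a p t = 2"
  shows "2 < H a q t"
proof -
  define X where "X = (t+a) powr p"
  define Y where "Y = \<bar>t-a\<bar> powr p"
  define r where "r = q / p"
  have r: "1 < r" using pq unfolding r_def by simp
  have XY: "X + Y = 2" using t unfolding H_def X_def Y_def by simp
  have Y0: "0 \<le> Y" unfolding Y_def by simp
  have YX: "Y < X" unfolding X_def Y_def using a t pq by (intro powr_less_mono2) auto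
  define u where "u = X - 1"
  have u: "0 < u" "u \<le> 1" using YX Y0 XY unfolding u_def by auto
  have X: "X = 1 + u" using XY unfolding u_def by linarith
  have Y: "Y = 1 - u" using XY unfolding u_def by linarith
  have "X powr r = (t+a) powr q" unfolding X_def powr_powr r_def using pq by simp
  moreover have "Y powr r = \<bar>t-a\<bar> powr q" unfolding Y_def powr_powr r_def using pq by simp
  ultimately have "H a q t = (1+u) powr r + (1-u) powr r" unfolding H_def X Y by simp
  then show ?thesis using key2[OF r u] by simp
qed

definition F :: "real \<Rightarrow> real \<Rightarrow> real" where
  "F a p = (1 - a powr p) powr (1/p)"

lemma Fprops:
  fixes a p :: real
  assumes a: "0 < a" "a < 1" and p: "0 < p"
  shows "0 < F a p" "F a p < 1" "F a p powr p = 1 - a powr p"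
proof -
  have ap: "0 < a powr p" "a powr p < 1"
    using a p powr_less_mono2[of p a 1] by auto
  show "0 < F a p" unfolding F_def using ap by simp
  have "(1 - a powr p) powr (1/p) < 1 powr (1/p)"
    using ap p by (intro powr_less_mono2) auto
  then show "F a p < 1" unfolding F_def by simp
  show "F a p powr p = 1 - a powr p" unfolding F_def powr_powr using p ap by simp
qed

lemma Fmono:
  fixes a p q :: real
  assumes a: "0 < a" "a < 1" and p: "0 < p" "p < q"
  shows "F a p < F a q"
proof -
  have q: "0 < q" using p by simp
  note Fp = Fprops[OF a p(1)] and Fq = Fprops[OF a q]
  have "F a p powr q < F a p powr p" using Fp p by (intro powr_less_mono') auto
  moreover have "a powr q < a powr p" using a p by (intro powr_less_mono') auto
  ultimately have "F a p powr q < F a q powr q" using Fp Fq by linarith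
  show ?thesis
  proof (rule ccontr)
    assume "\<not> F a p < F a q"
    then have "F a q powr q \<le> F a p powr q"
      using Fq q by (intro powr_mono2) auto
    then show False using \<open>F a p powr q < F a q powr q\<close> by simp
  qed
qed

lemma delta_ge2:
  fixes \<epsilon> p :: real
  assumes e: "0 < \<epsilon>" "\<epsilon> < 2" and p: "2 \<le> p"
  shows "delta p \<epsilon> = 1 - F (\<epsilon>/2) p"
proof (cases "p = 2")
  case False then show ?thesis using p unfolding delta_def F_def by simp
next
  case True
  define a where "a = \<epsilon>/2"
  have a: "0 < a" "a < 1" using e unfolding a_def by auto
  define b where "b = sqrt (1 - a^2)"
  have b: "0 \<le> b" "b\<^sup>2 = 1 - a^2" unfolding b_def using a by (auto simp: power_le_one)
  have b1: "b \<le> 1" unfolding b_def using a by simp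
  have Fb: "F a 2 = b" unfolding F_def b_def using a
    by (simp add: powr_half_sqrt powr_numeral power_le_one)
  have "H a 2 b = 2"
  proof -
    have "(b+a) powr 2 = (b+a)^2" using a b by (simp add: powr_numeral)
    moreover have "\<bar>b-a\<bar> powr 2 = (b-a)^2" by (simp add: powr_numeral)
    ultimately show ?thesis unfolding H_def using b by (simp add: power2_eq_square algebra_simps)
  qed
  then have "delta 2 \<epsilon> = 1 - b" using delta_eq[of \<epsilon> 2 b] e b b1 unfolding a_def by simp
  then show ?thesis using True Fb unfolding a_def by simp
qed

theorem proposition3p15:
  fixes \<epsilon> :: real
  assumes "0 < \<epsilon>" and "\<epsilon> < 2"
  shows "(\<forall>p1 p2. 2 \<le> p1 \<and> p1 < p2 \<longrightarrow> delta p2 \<epsilon> < delta p1 \<epsilon>)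
       \<and> (\<forall>p1 p2. 1 < p1 \<and> p1 < p2 \<and> p2 \<le> 2 \<longrightarrow> delta p1 \<epsilon> < delta p2 \<epsilon>)"
proof (intro conjI allI impI)
  have a: "0 < \<epsilon>/2" "\<epsilon>/2 < 1" using assms by auto
  fix p1 p2 :: real
  assume h: "2 \<le> p1 \<and> p1 < p2"
  then show "delta p2 \<epsilon> < delta p1 \<epsilon>"
    using delta_ge2[OF assms, of p1] delta_ge2[OF assms, of p2] Fmono[OF a, of p1 p2] by simp
next
  have a: "0 < \<epsilon>/2" "\<epsilon>/2 < 1" using assms by auto
  fix p1 p2 :: real
  assume h: "1 < p1 \<and> p1 < p2 \<and> p2 \<le> 2"
  obtain t1 where t1: "0 < t1" "t1 \<le> 1" "H (\<epsilon>/2) p1 t1 = 2" using root[OF a, of p1] h by auto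
  obtain t2 where t2: "0 < t2" "t2 \<le> 1" "H (\<epsilon>/2) p2 t2 = 2" using root[OF a, of p2] h by auto
  have d1: "delta p1 \<epsilon> = 1 - t1" using delta_eq[OF assms, of p1 t1] h t1 by simp
  have d2: "delta p2 \<epsilon> = 1 - t2" using delta_eq[OF assms, of p2 t2] h t2 by simp
  have "2 < H (\<epsilon>/2) p2 t1" using pm[OF a(1), of p1 p2 t1] h t1 by simp
  have "t2 < t1"
  proof (rule ccontr)
    assume "\<not> t2 < t1"
    then have "t1 = t2 \<or> t1 < t2" by linarith
    then show False using hmono[OF a(1), of p2 t1 t2] h t1 t2 \<open>2 < H (\<epsilon>/2) p2 t1\<close> by auto
  qed
  then show "delta p1 \<epsilon> < delta p2 \<epsilon>" using d1 d2 by simp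
qed

end
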